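(* For every bracket pattern $w$: $w\subseteq A(w)$, $\min(A(w))=1$, and $\max(A(w))=\|w\|$. In particular $A(w)\subseteq A(A(w))$.
   Context: $\mathbb N=\{1,2,\dots\}$, $\mathbb N_0=\mathbb N\cup\{0\}$. A bracket pattern is a non-empty finite subset $w\subseteq\mathbb N$; $\|w\|:=\max(w)$. The completion of a bracket pattern $w$ is $A(w):=\{j-i\mid j\in w,\ i\in\mathbb N_0,\ i\notin w,\ i<j\}$. *)

theory Defs
  imports Main
begin

definition bracket_pattern :: "nat set \<Rightarrow> bool" where
  "bracket_pattern w \<longleftrightarrow> w \<noteq> {} \<and> finite w \<and> 0 \<notin> w"

definition pnorm :: "nat set \<Rightarrow> nat" where
  "pnorm w = Max w"

definition completion :: "nat set \<Rightarrow> nat set" where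
  "completion w = {j - i | j i. j \<in> w \<and> i \<notin> w \<and> i < j}"

end

theory Submission
  imports Defs
begin

lemma memI: "j \<in> w \<Longrightarrow> i \<notin> w \<Longrightarrow> i < j \<Longrightarrow> x = j - i \<Longrightarrow> x \<in> completion w"
  unfolding completion_def by blast

lemma memE: "x \<in> completion w \<Longrightarrow> (\<And>j i. j \<in> w \<Longrightarrow> i \<notin> w \<Longrightarrow> i < j \<Longrightarrow> x = j - i \<Longrightarrow> P) \<Longrightarrow> P"
  unfolding completion_def by blast

lemma sub: "0 \<notin> w \<Longrightarrow> w \<subseteq> completion w"
proof
  fix j assume a: "0 \<notin> w" "j \<in> w"
  then have "0 < j" by (cases j) auto
  show "j \<in> completion w" by (rule memI[OF a(2) a(1) \<open>0 < j\<close>]) simp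
qed

lemma bnd: "finite w \<Longrightarrow> x \<in> completion w \<Longrightarrow> 1 \<le> x \<and> x \<le> Max w"
proof (erule memE)
  fix j i assume "finite w" "j \<in> w" "i < j" "x = j - i"
  moreover have "j \<le> Max w" using Max_ge \<open>finite w\<close> \<open>j \<in> w\<close> by blast
  ultimately show ?thesis by arith
qed

lemma one: assumes "bracket_pattern w" shows "1 \<in> completion w"
proof -
  have f: "finite w" "w \<noteq> {}" "0 \<notin> w" using assms by (auto simp: bracket_pattern_def)
  let ?j = "Min w"
  have j: "?j \<in> w" using f Min_in by blast
  have pos: "?j > 0" using j f by (cases "?j") auto
  have n: "?j - 1 \<notin> w"
  proof
    assume "?j - 1 \<in> w" then have "?j \<le> ?j - 1" using f Min_le by blast
    with pos show False by simp
  qed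
  show ?thesis by (rule memI[OF j n]) (use pos in simp_all)
qed

theorem lemma7p4:
  assumes "bracket_pattern w"
  shows "w \<subseteq> completion w \<and> Min (completion w) = 1 \<and> Max (completion w) = pnorm w
         \<and> completion w \<subseteq> completion (completion w)"
proof -
  have f: "finite w" "w \<noteq> {}" "0 \<notin> w" using assms by (auto simp: bracket_pattern_def)
  have s: "w \<subseteq> completion w" using sub f by blast
  have "completion w \<subseteq> {..Max w}" using bnd[OF f(1)] by auto
  then have fc: "finite (completion w)" using finite_subset by blast
  have o: "1 \<in> completion w" using one assms .
  have m1: "Min (completion w) = 1"
    by (rule Min_eqI[OF fc _ o]) (use bnd[OF f(1)] in blast)
  have "Max w \<in> completion w" using s f Max_in by blast
  then have m2: "Max (completion w) = pnorm w" unfolding pnorm_def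
    by (rule Max_eqI[OF fc, rotated]) (use bnd[OF f(1)] in blast)
  have "0 \<notin> completion w" using bnd[OF f(1)] by fastforce
  then have "completion w \<subseteq> completion (completion w)" by (rule sub)
  with s m1 m2 show ?thesis by blast
qed

end
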